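(* Let $a\ge b\ge c\ge 1$ be integers with $b$ and $c$ both odd. If the spider $S(a,b,c)$ is $e$-positive, then $a=b+c$. *)

theory Defs
  imports Complex_Main "HOL-Library.Poly_Mapping" "HOL-Library.Multiset" "HOL-Library.FuncSet"
begin

text \<open>Polynomials in the variables x_0, x_1, ... with real coefficients:
  a monomial is an exponent vector (nat to nat, finitely supported).\<close>
type_synonym rpoly = "(nat \<Rightarrow>\<^sub>0 nat) \<Rightarrow>\<^sub>0 real"

definition mon :: "(nat \<Rightarrow>\<^sub>0 nat) \<Rightarrow> rpoly" where
  "mon alpha = Poly_Mapping.single alpha 1"

text \<open>Chromatic symmetric function of the graph (V,E), restricted to the N variables
  x_0,...,x_{N-1}: sum over proper colourings kappa : V \<rightarrow> {0..<N} of prod_v x_{kappa v}.\<close>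
definition proper_colourings :: "nat \<Rightarrow> 'v set \<Rightarrow> ('v \<Rightarrow> 'v \<Rightarrow> bool) \<Rightarrow> ('v \<Rightarrow> nat) set" where
  "proper_colourings N V E =
     {\<kappa> \<in> V \<rightarrow>\<^sub>E {..<N}. \<forall>u\<in>V. \<forall>v\<in>V. E u v \<longrightarrow> \<kappa> u \<noteq> \<kappa> v}"

definition chromatic_sym :: "nat \<Rightarrow> 'v set \<Rightarrow> ('v \<Rightarrow> 'v \<Rightarrow> bool) \<Rightarrow> rpoly" where
  "chromatic_sym N V E =
     (\<Sum>\<kappa>\<in>proper_colourings N V E. mon (\<Sum>v\<in>V. Poly_Mapping.single (\<kappa> v) 1))"

definition elem_sym :: "nat \<Rightarrow> nat \<Rightarrow> rpoly" where
  "elem_sym N k = (\<Sum>S\<in>{S. S \<subseteq> {..<N} \<and> card S = k}. mon (\<Sum>i\<in>S. Poly_Mapping.single i 1))"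

definition partitions :: "nat \<Rightarrow> nat multiset set" where
  "partitions n = {lam. (\<forall>x\<in>#lam. 0 < x) \<and> sum_mset lam = n}"

definition elem_part :: "nat \<Rightarrow> nat multiset \<Rightarrow> rpoly" where
  "elem_part N lam = prod_mset (image_mset (elem_sym N) lam)"

text \<open>Symmetric functions are represented compatibly in every finite number N of variables.\<close>
definition e_positive :: "'v set \<Rightarrow> ('v \<Rightarrow> 'v \<Rightarrow> bool) \<Rightarrow> bool" where
  "e_positive V E \<longleftrightarrow>
     (\<exists>c :: nat multiset \<Rightarrow> real. (\<forall>lam\<in>partitions (card V). 0 \<le> c lam) \<and>
        (\<forall>N. chromatic_sym N V E =
              (\<Sum>lam\<in>partitions (card V). Poly_Mapping.single 0 (c lam) * elem_part N lam)))"

text \<open>The spider S(a,b,c): a centre (0,0) and three legs; leg j (j = 1,2,3) has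
  vertices (j,1),...,(j,len_j), with (j,1) adjacent to the centre and (j,k) adjacent to (j,k+1).\<close>
definition spider_len :: "nat \<Rightarrow> nat \<Rightarrow> nat \<Rightarrow> nat \<Rightarrow> nat" where
  "spider_len a b c j = (if j = 1 then a else if j = 2 then b else c)"

definition spider_V :: "nat \<Rightarrow> nat \<Rightarrow> nat \<Rightarrow> (nat \<times> nat) set" where
  "spider_V a b c = {(0,0)} \<union> {(j,k). j \<in> {1,2,3} \<and> 1 \<le> k \<and> k \<le> spider_len a b c j}"

definition spider_E :: "nat \<Rightarrow> nat \<Rightarrow> nat \<Rightarrow> (nat \<times> nat) \<Rightarrow> (nat \<times> nat) \<Rightarrow> bool" where
  "spider_E a b c u v \<longleftrightarrow> u \<in> spider_V a b c \<and> v \<in> spider_V a b c \<and>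
     ((fst u = fst v \<and> fst u \<noteq> 0 \<and> (snd v = snd u + 1 \<or> snd u = snd v + 1)) \<or>
      (u = (0,0) \<and> fst v \<noteq> 0 \<and> snd v = 1) \<or>
      (v = (0,0) \<and> fst u \<noteq> 0 \<and> snd u = 1))"

end

theory Submission
  imports Defs "HOL-Computational_Algebra.Polynomial"
begin

definition evm :: "(nat \<Rightarrow> 'a::comm_ring_1) \<Rightarrow> (nat \<Rightarrow>\<^sub>0 nat) \<Rightarrow> 'a" where
  "evm w \<alpha> = (\<Prod>i\<in>Poly_Mapping.keys \<alpha>. w i ^ Poly_Mapping.lookup \<alpha> i)"

definition ev :: "(real \<Rightarrow> 'a::comm_ring_1) \<Rightarrow> (nat \<Rightarrow> 'a) \<Rightarrow> rpoly \<Rightarrow> 'a" where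
  "ev \<phi> w P = (\<Sum>\<alpha>\<in>Poly_Mapping.keys P. \<phi> (Poly_Mapping.lookup P \<alpha>) * evm w \<alpha>)"

definition rhom :: "(real \<Rightarrow> 'a::comm_ring_1) \<Rightarrow> bool" where
  "rhom \<phi> \<longleftrightarrow> (\<forall>x y. \<phi> (x+y) = \<phi> x + \<phi> y) \<and> (\<forall>x y. \<phi> (x*y) = \<phi> x * \<phi> y) \<and> \<phi> 1 = 1"

lemma rhom_0: "rhom \<phi> \<Longrightarrow> \<phi> 0 = 0"
  unfolding rhom_def by (metis add.right_neutral add_left_cancel)

lemma evm_superset:
  assumes "finite F" "Poly_Mapping.keys \<alpha> \<subseteq> F"
  shows "evm w \<alpha> = (\<Prod>i\<in>F. w i ^ Poly_Mapping.lookup \<alpha> i)"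
  unfolding evm_def
  by (rule prod.mono_neutral_left[OF assms]) (auto simp: in_keys_iff)

lemma evm_add: "evm w (\<alpha> + \<beta>) = evm w \<alpha> * evm w \<beta>"
proof -
  let ?F = "Poly_Mapping.keys \<alpha> \<union> Poly_Mapping.keys \<beta>"
  have "evm w (\<alpha> + \<beta>) = (\<Prod>i\<in>?F. w i ^ Poly_Mapping.lookup (\<alpha>+\<beta>) i)"
    by (rule evm_superset) (use keys_add[of \<alpha> \<beta>] in auto)
  also have "\<dots> = (\<Prod>i\<in>?F. w i ^ Poly_Mapping.lookup \<alpha> i) * (\<Prod>i\<in>?F. w i ^ Poly_Mapping.lookup \<beta> i)"
    by (simp add: lookup_add power_add prod.distrib)
  also have "\<dots> = evm w \<alpha> * evm w \<beta>"
    by (subst (1 2) evm_superset[where F="?F"]) auto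
  finally show ?thesis .
qed

lemma evm_zero[simp]: "evm w 0 = 1"
  by (simp add: evm_def)

lemma evm_single1[simp]: "evm w (Poly_Mapping.single i (Suc 0)) = w i"
  by (simp add: evm_def)

lemma evm_sum: "evm w (\<Sum>v\<in>V. f v) = (\<Prod>v\<in>V. evm w (f v))"
  by (induction V rule: infinite_finite_induct) (auto simp: evm_add)

lemma ev_superset:
  assumes "rhom \<phi>" "finite F" "Poly_Mapping.keys P \<subseteq> F"
  shows "ev \<phi> w P = (\<Sum>\<alpha>\<in>F. \<phi> (Poly_Mapping.lookup P \<alpha>) * evm w \<alpha>)"
  unfolding ev_def
  by (rule sum.mono_neutral_left[OF assms(2,3)]) (auto simp: in_keys_iff rhom_0[OF assms(1)])

lemma ev_add:
  assumes "rhom \<phi>"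
  shows "ev \<phi> w (P + Q) = ev \<phi> w P + ev \<phi> w Q"
proof -
  let ?F = "Poly_Mapping.keys P \<union> Poly_Mapping.keys Q"
  have "ev \<phi> w (P + Q) = (\<Sum>\<alpha>\<in>?F. \<phi> (Poly_Mapping.lookup (P+Q) \<alpha>) * evm w \<alpha>)"
    using keys_add[of P Q] assms by (intro ev_superset) auto
  also have "\<dots> = (\<Sum>\<alpha>\<in>?F. \<phi> (Poly_Mapping.lookup P \<alpha>) * evm w \<alpha>) + (\<Sum>\<alpha>\<in>?F. \<phi> (Poly_Mapping.lookup Q \<alpha>) * evm w \<alpha>)"
    using assms by (simp add: lookup_add rhom_def distrib_right sum.distrib)
  also have "\<dots> = ev \<phi> w P + ev \<phi> w Q"
    using assms by (subst (1 2) ev_superset[where F="?F"]) auto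
  finally show ?thesis .
qed

lemma ev_zero[simp]: "ev \<phi> w 0 = 0"
  by (simp add: ev_def)

lemma ev_sum:
  assumes "rhom \<phi>"
  shows "ev \<phi> w (\<Sum>i\<in>I. f i) = (\<Sum>i\<in>I. ev \<phi> w (f i))"
  by (induction I rule: infinite_finite_induct) (auto simp: ev_add[OF assms])

lemma ev_single:
  assumes "rhom \<phi>"
  shows "ev \<phi> w (Poly_Mapping.single \<alpha> r) = \<phi> r * evm w \<alpha>"
  using assms by (cases "r = 0") (auto simp: ev_def rhom_0)

lemma pm_expand: "P = (\<Sum>\<alpha>\<in>Poly_Mapping.keys P. Poly_Mapping.single \<alpha> (Poly_Mapping.lookup P \<alpha>))"
  by (rule poly_mapping_eqI) (auto simp: lookup_sum lookup_single when_def in_keys_iff)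

lemma ev_mult:
  assumes "rhom \<phi>"
  shows "ev \<phi> w (P * Q) = ev \<phi> w P * ev \<phi> w Q"
proof -
  have "P * Q = (\<Sum>\<alpha>\<in>Poly_Mapping.keys P. Poly_Mapping.single \<alpha> (Poly_Mapping.lookup P \<alpha>)) *
     (\<Sum>\<beta>\<in>Poly_Mapping.keys Q. Poly_Mapping.single \<beta> (Poly_Mapping.lookup Q \<beta>))"
    by (subst (1) pm_expand, subst (2) pm_expand) (rule refl)
  also have "\<dots> = (\<Sum>\<alpha>\<in>Poly_Mapping.keys P. \<Sum>\<beta>\<in>Poly_Mapping.keys Q.
     Poly_Mapping.single (\<alpha>+\<beta>) (Poly_Mapping.lookup P \<alpha> * Poly_Mapping.lookup Q \<beta>))"
    by (simp add: sum_product mult_single)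
  finally have "ev \<phi> w (P * Q) = (\<Sum>\<alpha>\<in>Poly_Mapping.keys P. \<Sum>\<beta>\<in>Poly_Mapping.keys Q.
     \<phi> (Poly_Mapping.lookup P \<alpha>) * evm w \<alpha> * (\<phi> (Poly_Mapping.lookup Q \<beta>) * evm w \<beta>))"
    using assms by (simp add: ev_sum ev_single evm_add rhom_def mult_ac)
  also have "\<dots> = ev \<phi> w P * ev \<phi> w Q"
    unfolding ev_def sum_product by (simp add: mult_ac)
  finally show ?thesis .
qed

lemma ev_one:
  assumes "rhom \<phi>" shows "ev \<phi> w 1 = 1"
proof -
  have "ev \<phi> w 1 = ev \<phi> w (Poly_Mapping.single 0 1)" by simp
  also have "\<dots> = 1" using assms by (simp only: ev_single) (simp add: rhom_def)
  finally show ?thesis .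
qed

lemma ev_prod_mset:
  assumes "rhom \<phi>"
  shows "ev \<phi> w (prod_mset (image_mset f M)) = (\<Prod>k\<in>#M. ev \<phi> w (f k))"
  by (induction M) (auto simp: ev_mult[OF assms] ev_one[OF assms])

lemma ev_mon:
  assumes "rhom \<phi>" shows "ev \<phi> w (mon \<alpha>) = evm w \<alpha>"
  using assms by (simp add: mon_def ev_single rhom_def)

lemma ev_chrom:
  assumes "rhom \<phi>" "finite V"
  shows "ev \<phi> w (chromatic_sym N V E) = (\<Sum>\<kappa>\<in>proper_colourings N V E. \<Prod>v\<in>V. w (\<kappa> v))"
  using assms by (simp add: chromatic_sym_def ev_sum ev_mon evm_sum)

lemma ev_esym:
  assumes "rhom \<phi>"
  shows "ev \<phi> w (elem_sym N k) = (\<Sum>S\<in>{S. S \<subseteq> {..<N} \<and> card S = k}. \<Prod>i\<in>S. w i)"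
  using assms by (simp add: elem_sym_def ev_sum ev_mon evm_sum)

definition esym :: "(nat \<Rightarrow> 'a::comm_ring_1) \<Rightarrow> nat set \<Rightarrow> nat \<Rightarrow> 'a" where
  "esym w I k = (\<Sum>S\<in>{S. S \<subseteq> I \<and> card S = k}. \<Prod>i\<in>S. w i)"

lemma esym_0: "finite I \<Longrightarrow> esym w I 0 = 1"
proof -
  assume "finite I"
  then have "{S. S \<subseteq> I \<and> card S = 0} = {{}}" by (auto dest: finite_subset)
  then show ?thesis by (simp add: esym_def)
qed

lemma esym_insert:
  assumes "finite I" "x \<notin> I"
  shows "esym w (insert x I) (Suc j) = esym w I (Suc j) + w x * esym w I j"
proof -
  have eq: "{S. S \<subseteq> insert x I \<and> card S = Suc j} =
     {S. S \<subseteq> I \<and> card S = Suc j} \<union> insert x ` {S. S \<subseteq> I \<and> card S = j}"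
  proof (intro equalityI subsetI)
    fix S assume S: "S \<in> {S. S \<subseteq> insert x I \<and> card S = Suc j}"
    show "S \<in> {S. S \<subseteq> I \<and> card S = Suc j} \<union> insert x ` {S. S \<subseteq> I \<and> card S = j}"
    proof (cases "x \<in> S")
      case True
      have fS: "finite S" using S assms finite_subset by auto
      have "S = insert x (S - {x})" using True by auto
      moreover have "S - {x} \<subseteq> I" "card (S - {x}) = j" using S True fS by auto
      ultimately show ?thesis by blast
    next
      case False then show ?thesis using S by auto
    qed
  next
    fix S assume "S \<in> {S. S \<subseteq> I \<and> card S = Suc j} \<union> insert x ` {S. S \<subseteq> I \<and> card S = j}"
    then show "S \<in> {S. S \<subseteq> insert x I \<and> card S = Suc j}"
    proof
      assume "S \<in> {S. S \<subseteq> I \<and> card S = Suc j}" then show ?thesis by auto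
    next
      assume "S \<in> insert x ` {S. S \<subseteq> I \<and> card S = j}"
      then obtain T where T: "S = insert x T" "T \<subseteq> I" "card T = j" by auto
      have "finite T" using T(2) assms(1) finite_subset by auto
      moreover have "x \<notin> T" using T(2) assms(2) by auto
      ultimately have "insert x T \<subseteq> insert x I \<and> card (insert x T) = Suc j" using T by auto
      then show ?thesis using T(1) by blast
    qed
  qed
  have fin1: "finite {S. S \<subseteq> I \<and> card S = Suc j}" using assms by simp
  have fin2: "finite (insert x ` {S. S \<subseteq> I \<and> card S = j})" using assms by simp
  have disj: "{S. S \<subseteq> I \<and> card S = Suc j} \<inter> insert x ` {S. S \<subseteq> I \<and> card S = j} = {}"
    using assms by auto
  have inj: "inj_on (insert x) {S. S \<subseteq> I \<and> card S = j}"
    using assms by (intro inj_onI) (metis insert_ident mem_Collect_eq subsetD)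
  have "esym w (insert x I) (Suc j) = esym w I (Suc j) + (\<Sum>S\<in>insert x ` {S. S \<subseteq> I \<and> card S = j}. \<Prod>i\<in>S. w i)"
    unfolding esym_def eq by (rule sum.union_disjoint[OF fin1 fin2 disj])
  also have "(\<Sum>S\<in>insert x ` {S. S \<subseteq> I \<and> card S = j}. \<Prod>i\<in>S. w i) =
      (\<Sum>S\<in>{S. S \<subseteq> I \<and> card S = j}. \<Prod>i\<in>insert x S. w i)"
    by (rule sum.reindex[OF inj, unfolded comp_def])
  also have "\<dots> = (\<Sum>S\<in>{S. S \<subseteq> I \<and> card S = j}. w x * (\<Prod>i\<in>S. w i))"
  proof (intro sum.cong refl)
    fix S assume S: "S \<in> {S. S \<subseteq> I \<and> card S = j}"
    then have "finite S" "x \<notin> S" using assms finite_subset by auto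
    then show "(\<Prod>i\<in>insert x S. w i) = w x * (\<Prod>i\<in>S. w i)" by simp
  qed
  also have "\<dots> = w x * esym w I j" by (simp add: esym_def sum_distrib_left)
  finally show ?thesis .
qed

lemma vieta:
  assumes "finite I"
  shows "coeff (\<Prod>i\<in>I. [:1, w i:]) k = esym w I k"
  using assms
proof (induction I arbitrary: k rule: finite_induct)
  case empty
  show ?case
  proof (cases k)
    case 0
    have e: "{S::nat set. S = {} \<and> card S = 0} = {{}}" by auto
    show ?thesis using 0 by (simp add: esym_def e)
  next
    case (Suc j)
    have e: "{S::nat set. S = {} \<and> card S = Suc j} = {}" by auto
    show ?thesis using Suc by (simp add: esym_def e)
  qed
next
  case (insert x I)
  have m: "[:1, w x:] * p = p + pCons 0 (smult (w x) p)" for p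
    by (simp add: mult_pCons_left)
  show ?case
  proof (cases k)
    case 0
    then show ?thesis using insert by (simp add: m esym_0)
  next
    case (Suc j)
    then show ?thesis using insert by (simp add: m esym_insert)
  qed
qed

lemma ev_esym_coeff:
  assumes "rhom \<phi>"
  shows "ev \<phi> w (elem_sym N k) = coeff (\<Prod>i<N. [:1, w i:]) k"
  by (simp add: vieta ev_esym[OF assms] esym_def)

lemma finite_proper: "finite V \<Longrightarrow> finite (proper_colourings N V E)"
  unfolding proper_colourings_def by (rule finite_subset[of _ "V \<rightarrow>\<^sub>E {..<N}"]) (auto intro: finite_PiE)

lemma leaf_elim:
  fixes W :: "'a \<Rightarrow> nat \<Rightarrow> 'b::comm_ring_1"
  assumes fin: "finite V'" and l: "l \<notin> V'" and u: "u \<in> V'"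
    and EE: "\<forall>x\<in>V'. \<forall>y\<in>V'. E x y = E' x y"
    and El1: "\<forall>x\<in>V'. E l x = (x = u)" and El2: "\<forall>x\<in>V'. E x l = (x = u)" and Ell: "\<not> E l l"
  shows "(\<Sum>\<kappa>\<in>proper_colourings N (insert l V') E. \<Prod>v\<in>insert l V'. W v (\<kappa> v)) =
    (\<Sum>\<kappa>\<in>proper_colourings N V' E'. \<Prod>v\<in>V'. (W(u := (\<lambda>c. W u c * (\<Sum>d\<in>{..<N}-{c}. W l d)))) v (\<kappa> v))"
proof -
  let ?P = "proper_colourings N (insert l V') E"
  let ?P' = "proper_colourings N V' E'"
  let ?h = "\<lambda>(g::'a \<Rightarrow> nat, d::nat). g(l := d)"
  let ?S = "SIGMA g:?P'. {..<N} - {g u}"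
  have seteq: "?P = ?h ` ?S"
  proof (intro equalityI subsetI)
    fix \<kappa> assume k: "\<kappa> \<in> ?P"
    define g where "g = \<kappa>(l := undefined)"
    have kP: "\<kappa> \<in> insert l V' \<rightarrow>\<^sub>E {..<N}" and kp: "\<forall>x\<in>insert l V'. \<forall>y\<in>insert l V'. E x y \<longrightarrow> \<kappa> x \<noteq> \<kappa> y"
      using k by (auto simp: proper_colourings_def)
    have "g \<in> V' \<rightarrow>\<^sub>E {..<N}" using kP l by (auto simp: g_def PiE_iff extensional_def)
    moreover have "\<forall>x\<in>V'. \<forall>y\<in>V'. E' x y \<longrightarrow> g x \<noteq> g y"
      using kp EE l by (auto simp: g_def)
    ultimately have gP: "g \<in> ?P'" by (simp add: proper_colourings_def)
    have "\<kappa> l < N" using kP by auto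
    moreover have "\<kappa> l \<noteq> g u" using kp El1 u l by (auto simp: g_def)
    ultimately have "(g, \<kappa> l) \<in> ?S" using gP by auto
    moreover have "\<kappa> = ?h (g, \<kappa> l)" by (simp add: g_def)
    ultimately show "\<kappa> \<in> ?h ` ?S" by blast
  next
    fix \<kappa> assume "\<kappa> \<in> ?h ` ?S"
    then obtain g d where gd: "g \<in> ?P'" "d < N" "d \<noteq> g u" and kdef: "\<kappa> = g(l := d)" by auto
    have gP: "g \<in> V' \<rightarrow>\<^sub>E {..<N}" and gp: "\<forall>x\<in>V'. \<forall>y\<in>V'. E' x y \<longrightarrow> g x \<noteq> g y"
      using gd(1) by (auto simp: proper_colourings_def)
    have "\<kappa> \<in> insert l V' \<rightarrow>\<^sub>E {..<N}" using gP gd(2) by (auto simp: kdef PiE_iff extensional_def)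
    moreover have "\<forall>x\<in>insert l V'. \<forall>y\<in>insert l V'. E x y \<longrightarrow> \<kappa> x \<noteq> \<kappa> y"
    proof (intro ballI impI)
      fix x y assume x: "x \<in> insert l V'" and y: "y \<in> insert l V'" and e: "E x y"
      show "\<kappa> x \<noteq> \<kappa> y"
      proof (cases "x = l")
        case True
        then have "y \<noteq> l" using e Ell by auto
        then have "y = u" using El1 e True y by auto
        then show ?thesis using True gd(3) l u by (auto simp: kdef)
      next
        case False
        note xF = False
        show ?thesis
        proof (cases "y = l")
          case True
          then have "x = u" using El2 e xF x by auto
          then show ?thesis using True gd(3) l u by (auto simp: kdef)
        next
          case False
          then show ?thesis using xF x y e EE gp l by (auto simp: kdef)
        qed
      qed
    qed
    ultimately show "\<kappa> \<in> ?P" by (simp add: proper_colourings_def)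
  qed
  have inj: "inj_on ?h ?S"
  proof (rule inj_onI)
    fix p q assume p: "p \<in> ?S" and q: "q \<in> ?S" and e: "?h p = ?h q"
    obtain g d where pd: "p = (g, d)" by force
    obtain g' d' where qd: "q = (g', d')" by force
    have "g l = undefined" "g' l = undefined" using p q l by (auto simp: pd qd proper_colourings_def PiE_iff extensional_def)
    moreover have e': "g(l := d) = g'(l := d')" using e by (simp add: pd qd)
    ultimately have "g = g'" "d = d'"
    proof -
      show "d = d'" using fun_cong[OF e', of l] by simp
      show "g = g'"
      proof
        fix v show "g v = g' v"
          using fun_cong[OF e', of v] \<open>g l = undefined\<close> \<open>g' l = undefined\<close> by (cases "v = l") auto
      qed
    qed
    then show "p = q" by (simp add: pd qd)
  qed
  have "(\<Sum>\<kappa>\<in>?P. \<Prod>v\<in>insert l V'. W v (\<kappa> v)) = (\<Sum>x\<in>?S. \<Prod>v\<in>insert l V'. W v (?h x v))"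
    unfolding seteq by (subst sum.reindex[OF inj]) (simp add: comp_def)
  also have "\<dots> = (\<Sum>(g,d)\<in>?S. W l d * (\<Prod>v\<in>V'. W v (g v)))"
  proof (intro sum.cong refl)
    fix x assume "x \<in> ?S"
    obtain g d where x: "x = (g, d)" by force
    have "(\<Prod>v\<in>insert l V'. W v ((g(l:=d)) v)) = W l d * (\<Prod>v\<in>V'. W v ((g(l:=d)) v))"
      using fin l by simp
    also have "(\<Prod>v\<in>V'. W v ((g(l:=d)) v)) = (\<Prod>v\<in>V'. W v (g v))"
      using l by (intro prod.cong refl) auto
    finally show "(\<Prod>v\<in>insert l V'. W v (?h x v)) = (case x of (g,d) \<Rightarrow> W l d * (\<Prod>v\<in>V'. W v (g v)))"
      by (simp add: x)
  qed
  also have "\<dots> = (\<Sum>g\<in>?P'. \<Sum>d\<in>{..<N} - {g u}. W l d * (\<Prod>v\<in>V'. W v (g v)))"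
    by (rule sum.Sigma[symmetric]) (simp_all add: finite_proper fin)
  also have "\<dots> = (\<Sum>g\<in>?P'. \<Prod>v\<in>V'. (W(u := (\<lambda>c. W u c * (\<Sum>d\<in>{..<N}-{c}. W l d)))) v (g v))"
  proof (intro sum.cong refl)
    fix g assume "g \<in> ?P'"
    have "(\<Prod>v\<in>V'. (W(u := (\<lambda>c. W u c * (\<Sum>d\<in>{..<N}-{c}. W l d)))) v (g v)) =
       (W u (g u) * (\<Sum>d\<in>{..<N}-{g u}. W l d)) * (\<Prod>v\<in>V'-{u}. W v (g v))"
      using fin u by (subst prod.remove[of _ u]) auto
    also have "\<dots> = (\<Sum>d\<in>{..<N}-{g u}. W l d) * (\<Prod>v\<in>V'. W v (g v))"
      using fin u by (subst (2) prod.remove[of _ u]) (auto simp: mult_ac)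
    finally have eq: "(\<Prod>v\<in>V'. (W(u := (\<lambda>c. W u c * (\<Sum>d\<in>{..<N}-{c}. W l d)))) v (g v)) = (\<Sum>d\<in>{..<N}-{g u}. W l d) * (\<Prod>v\<in>V'. W v (g v))" .
    show "(\<Sum>d\<in>{..<N} - {g u}. W l d * (\<Prod>v\<in>V'. W v (g v))) =
        (\<Prod>v\<in>V'. (W(u := (\<lambda>c. W u c * (\<Sum>d\<in>{..<N}-{c}. W l d)))) v (g v))"
      unfolding eq by (simp add: sum_distrib_right)
  qed
  finally show ?thesis .
qed

definition SV :: "(nat \<Rightarrow> nat) \<Rightarrow> (nat \<times> nat) set" where
  "SV f = {(0,0)} \<union> {(j,k). j \<in> {1,2,3} \<and> 1 \<le> k \<and> k \<le> f j}"

definition SE :: "(nat \<Rightarrow> nat) \<Rightarrow> (nat \<times> nat) \<Rightarrow> (nat \<times> nat) \<Rightarrow> bool" where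
  "SE f u v \<longleftrightarrow> u \<in> SV f \<and> v \<in> SV f \<and>
     ((fst u = fst v \<and> fst u \<noteq> 0 \<and> (snd v = snd u + 1 \<or> snd u = snd v + 1)) \<or>
      (u = (0,0) \<and> fst v \<noteq> 0 \<and> snd v = 1) \<or>
      (v = (0,0) \<and> fst u \<noteq> 0 \<and> snd u = 1))"

lemma spider_SV: "spider_V a b c = SV (spider_len a b c)"
  by (simp add: spider_V_def SV_def)

lemma spider_SE: "spider_E a b c = SE (spider_len a b c)"
  by (simp add: spider_E_def SE_def spider_SV fun_eq_iff)

lemma finite_SV: "finite (SV f)"
proof -
  have "SV f \<subseteq> {0..3} \<times> {0..f 1 + f 2 + f 3}" by (auto simp: SV_def)
  then show ?thesis by (rule finite_subset) simp
qed

definition Z :: "nat \<Rightarrow> (nat \<Rightarrow> nat) \<Rightarrow> (nat \<times> nat \<Rightarrow> nat \<Rightarrow> 'a::comm_ring_1) \<Rightarrow> 'a" where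
  "Z N f W = (\<Sum>\<kappa>\<in>proper_colourings N (SV f) (SE f). \<Prod>v\<in>SV f. W v (\<kappa> v))"

lemma Z_cong: "(\<And>v. v \<in> SV f \<Longrightarrow> W v = W' v) \<Longrightarrow> Z N f W = Z N f W'"
  unfolding Z_def by (intro sum.cong refl prod.cong) auto

lemma Z_step:
  assumes j: "j \<in> {1,2,3}" and fj: "f j = Suc L"
  defines "u \<equiv> (if L = 0 then (0,0) else (j, L))"
  shows "Z N f W = Z N (f(j:=L)) (W(u := (\<lambda>c. W u c * (\<Sum>d\<in>{..<N}-{c}. W (j, Suc L) d))))"
proof -
  let ?g = "f(j:=L)"
  have V: "SV f = insert (j, Suc L) (SV ?g)" using j fj by (auto simp: SV_def)
  have l: "(j, Suc L) \<notin> SV ?g" using j by (auto simp: SV_def)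
  have u: "u \<in> SV ?g" using j by (auto simp: SV_def u_def)
  have EE: "\<forall>x\<in>SV ?g. \<forall>y\<in>SV ?g. SE f x y = SE ?g x y" using V by (auto simp: SE_def)
  have lin: "(j, Suc L) \<in> SV f" using V by simp
  have El1: "\<forall>x\<in>SV ?g. SE f (j, Suc L) x = (x = u)"
  proof
    fix x assume x: "x \<in> SV ?g"
    obtain a b where xab: "x = (a,b)" by force
    have xf: "x \<in> SV f" using x V by simp
    have "a = 0 \<and> b = 0 \<or> (a \<in> {1,2,3} \<and> 1 \<le> b \<and> b \<le> ?g a)" using x by (simp add: SV_def xab)
    then show "SE f (j, Suc L) x = (x = u)"
      unfolding SE_def using lin xf j by (cases "L = 0") (auto simp: u_def xab split: if_splits)
  qed
  have El2: "\<forall>x\<in>SV ?g. SE f x (j, Suc L) = (x = u)"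
  proof
    fix x assume x: "x \<in> SV ?g"
    obtain a b where xab: "x = (a,b)" by force
    have xf: "x \<in> SV f" using x V by simp
    have "a = 0 \<and> b = 0 \<or> (a \<in> {1,2,3} \<and> 1 \<le> b \<and> b \<le> ?g a)" using x by (simp add: SV_def xab)
    then show "SE f x (j, Suc L) = (x = u)"
      unfolding SE_def using lin xf j by (cases "L = 0") (auto simp: u_def xab split: if_splits)
  qed
  have Ell: "\<not> SE f (j, Suc L) (j, Suc L)" by (simp add: SE_def)
  show ?thesis unfolding Z_def V
    by (rule leaf_elim[OF finite_SV l u EE El1 El2 Ell])
qed

fun A :: "(nat \<Rightarrow> 'a::comm_ring_1) \<Rightarrow> nat \<Rightarrow> (nat \<Rightarrow> 'a) \<Rightarrow> nat \<Rightarrow> nat \<Rightarrow> 'a" where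
  "A w N B 0 = B"
| "A w N B (Suc L) = (\<lambda>c. \<Sum>d\<in>{..<N}-{c}. w d * A w N B L d)"

lemma A_shift: "A w N B (Suc L) = A w N (\<lambda>c. \<Sum>d\<in>{..<N}-{c}. w d * B d) L"
  by (induction L) auto

lemma leg:
  assumes "j \<in> {1,2,3}" "f j = Suc L" "\<forall>k. 1 \<le> k \<and> k \<le> L \<longrightarrow> W (j,k) = w"
    "W (j, Suc L) = (\<lambda>c. w c * B c)"
  shows "Z N f W = Z N (f(j:=0)) (W((0,0) := (\<lambda>c. W (0,0) c * A w N B (Suc L) c)))"
  using assms
proof (induction L arbitrary: f W B)
  case 0
  show ?case using Z_step[where j=j and f=f and L=0 and N=N and W=W] 0 by (simp add: fun_upd_def)
next
  case (Suc L)
  let ?u = "(j, Suc L)"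
  let ?B' = "\<lambda>c. \<Sum>d\<in>{..<N}-{c}. w d * B d"
  let ?W' = "W(?u := (\<lambda>c. W ?u c * (\<Sum>d\<in>{..<N}-{c}. W (j, Suc (Suc L)) d)))"
  have s1: "Z N f W = Z N (f(j := Suc L)) ?W'"
    using Z_step[where j=j and f=f and L="Suc L" and N=N and W=W] Suc.prems by simp
  have Wu: "W ?u = w" using Suc.prems(3) by simp
  have W'u: "?W' ?u = (\<lambda>c. w c * ?B' c)" using Suc.prems(4) Wu by (simp add: mult_ac)
  have IH: "Z N (f(j := Suc L)) ?W' = Z N ((f(j := Suc L))(j:=0)) (?W'((0,0) := (\<lambda>c. ?W' (0,0) c * A w N ?B' (Suc L) c)))"
    by (rule Suc.IH) (use Suc.prems W'u in auto)
  have "Z N ((f(j := Suc L))(j:=0)) (?W'((0,0) := (\<lambda>c. ?W' (0,0) c * A w N ?B' (Suc L) c))) =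
        Z N (f(j:=0)) (W((0,0) := (\<lambda>c. W (0,0) c * A w N B (Suc (Suc L)) c)))"
  proof -
    have "(f(j := Suc L))(j:=0) = f(j:=0)" by simp
    moreover have "A w N ?B' (Suc L) = A w N B (Suc (Suc L))" by (simp only: A_shift[of w N B "Suc L"])
    moreover have "?W' (0,0) = W (0,0)" by simp
    ultimately show ?thesis using Suc.prems(1)
      by (auto intro!: Z_cong simp: SV_def)
  qed
  then show ?case using s1 IH by (simp add: fun_upd_def)
qed

lemma Z0:
  assumes "\<forall>j\<in>{1,2,3}. f j = 0"
  shows "Z N f W = (\<Sum>c<N. W (0,0) c)"
proof -
  have V: "SV f = {(0,0)}" using assms by (auto simp: SV_def)
  have P: "proper_colourings N {(0,0)} (SE f) = (\<lambda>c. (\<lambda>_. undefined)((0,0) := c)) ` {..<N}"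
  proof (intro equalityI subsetI)
    fix \<kappa> assume "\<kappa> \<in> proper_colourings N {(0,0)} (SE f)"
    then have k: "\<kappa> \<in> {(0,0)} \<rightarrow>\<^sub>E {..<N}" by (simp add: proper_colourings_def)
    then have "\<kappa> = (\<lambda>_. undefined)((0,0) := \<kappa> (0,0))" by (auto simp: PiE_iff extensional_def fun_eq_iff)
    moreover have "\<kappa> (0,0) < N" using k by auto
    ultimately show "\<kappa> \<in> (\<lambda>c. (\<lambda>_. undefined)((0,0) := c)) ` {..<N}" by blast
  next
    fix \<kappa> assume "\<kappa> \<in> (\<lambda>c. (\<lambda>_. undefined)((0::nat,0::nat) := c)) ` {..<N}"
    then show "\<kappa> \<in> proper_colourings N {(0,0)} (SE f)"
      by (auto simp: proper_colourings_def PiE_iff extensional_def SE_def)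
  qed
  have inj: "inj_on (\<lambda>c. (\<lambda>_. undefined)((0::nat,0::nat) := c)) {..<N}"
    by (rule inj_onI) (metis fun_upd_same)
  show ?thesis unfolding Z_def V P
    by (subst sum.reindex[OF inj]) simp
qed

lemma spider_Z:
  assumes "f 1 = Suc a" "f 2 = Suc b" "f 3 = Suc c"
  shows "Z N f (\<lambda>_. w) = (\<Sum>x<N. w x * A w N (\<lambda>_. 1) (Suc a) x * A w N (\<lambda>_. 1) (Suc b) x * A w N (\<lambda>_. 1) (Suc c) x)"
proof -
  let ?A = "\<lambda>L. A w N (\<lambda>_. 1) (Suc L)"
  have w1: "w = (\<lambda>c. w c * 1)" by simp
  define W0 where "W0 = (\<lambda>_::nat\<times>nat. w)"
  define W1 where "W1 = W0((0,0) := (\<lambda>x. W0 (0,0) x * ?A a x))"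
  define W2 where "W2 = W1((0,0) := (\<lambda>x. W1 (0,0) x * ?A b x))"
  define W3 where "W3 = W2((0,0) := (\<lambda>x. W2 (0,0) x * ?A c x))"
  have "Z N f W0 = Z N (f(1:=0)) W1"
    unfolding W1_def by (rule leg) (use assms w1 in \<open>auto simp: W0_def\<close>)
  also have "\<dots> = Z N (f(1:=0,2:=0)) W2"
    unfolding W2_def by (rule leg) (use assms w1 in \<open>auto simp: W0_def W1_def\<close>)
  also have "\<dots> = Z N (f(1:=0,2:=0,3:=0)) W3"
    unfolding W3_def by (rule leg) (use assms w1 in \<open>auto simp: W0_def W1_def W2_def\<close>)
  also have "\<dots> = (\<Sum>x<N. W3 (0,0) x)"
    by (subst Z0) auto
  finally show ?thesis by (simp add: W0_def W1_def W2_def W3_def)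
qed

definition t :: "real poly" where "t = [:0,1:]"
definition w3 :: "nat \<Rightarrow> real poly" where "w3 i = (if i = 0 then 1 else if i = 1 then -1 else t)"
definition sg :: "nat \<Rightarrow> real" where "sg k = (if k \<le> 1 then 1 else if k \<le> 3 then -1 else 0)"
definition dg :: "nat \<Rightarrow> nat" where "dg k = (if k = 1 \<or> k = 3 then 1 else 0)"

lemma G3: "(\<Prod>i<3. [:1, w3 i:]) = [:1, t, -1, -t:]"
proof -
  have "(\<Prod>i<3. [:1, w3 i:]) = [:1, w3 0:] * [:1, w3 1:] * [:1, w3 2:]"
    by (simp add: numeral_3_eq_3 numeral_2_eq_2 lessThan_Suc mult_ac)
  also have "\<dots> = [:1, t, -1, -t:]"
    by (simp add: w3_def mult_pCons_left)
  finally show ?thesis .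
qed

lemma P4_coeff: "coeff [:1, t, -1, -t:] k = monom (sg k) (dg k)"
proof -
  consider "k = 0" | "k = 1" | "k = 2" | "k = 3" | j where "k = Suc (Suc (Suc (Suc j)))"
    by (metis One_nat_def Suc_1 numeral_3_eq_3 not0_implies_Suc)
  then show ?thesis
  proof cases
    case 1 then show ?thesis by (simp add: sg_def dg_def)
  next
    case 2 then show ?thesis by (simp add: sg_def dg_def t_def monom_Suc)
  next
    case 3 then show ?thesis by (simp add: sg_def dg_def numeral_2_eq_2 monom_0, simp add: one_pCons)
  next
    case 4 then show ?thesis by (simp add: sg_def dg_def numeral_3_eq_3 t_def monom_Suc monom_0)
  next
    case 5 then show ?thesis by (simp add: sg_def dg_def)
  qed
qed

lemma G3_coeff: "coeff (\<Prod>i<3. [:1, w3 i:]) k = monom (sg k) (dg k)"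
  unfolding G3 by (rule P4_coeff)

lemma monom_prod_mset:
  "(\<Prod>k\<in>#M. monom (sg k) (dg k)) = monom (\<Prod>k\<in>#M. sg k) (\<Sum>k\<in>#M. dg k)"
  by (induction M) (auto simp: mult_monom)

abbreviation U :: "nat \<Rightarrow> nat \<Rightarrow> real poly" where "U \<equiv> A w3 3 (\<lambda>_. 1)"

lemma tmul: "t * p = pCons 0 p" by (simp add: t_def mult_pCons_left)

lemma U_rec:
  "U (Suc L) 0 = - U L (Suc 0) + t * U L 2"
  "U (Suc L) (Suc 0) = U L 0 + t * U L 2"
  "U (Suc L) 2 = U L 0 - U L (Suc 0)"
proof -
  have s0: "{..<3::nat} - {0} = {Suc 0,2}" and s1: "{..<3::nat} - {Suc 0} = {0,2}" and s2: "{..<3::nat} - {2} = {0,Suc 0}" by auto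
  show "U (Suc L) 0 = - U L (Suc 0) + t * U L 2" by (simp add: s0 w3_def)
  show "U (Suc L) (Suc 0) = U L 0 + t * U L 2" by (simp add: s1 w3_def)
  show "U (Suc L) 2 = U L 0 - U L (Suc 0)" by (simp add: s2 w3_def)
qed

lemma U_coeff_rec:
  "coeff (U (Suc L) 0) 0 = - coeff (U L (Suc 0)) 0"
  "coeff (U (Suc L) 0) (Suc 0) = - coeff (U L (Suc 0)) (Suc 0) + coeff (U L 2) 0"
  "coeff (U (Suc L) (Suc 0)) 0 = coeff (U L 0) 0"
  "coeff (U (Suc L) (Suc 0)) (Suc 0) = coeff (U L 0) (Suc 0) + coeff (U L 2) 0"
  "coeff (U (Suc L) 2) 0 = coeff (U L 0) 0 - coeff (U L (Suc 0)) 0"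
  by (simp_all del: A.simps add: U_rec tmul)

lemma U_closed:
  "coeff (U (2*m) 0) 0 = (-1)^m \<and> coeff (U (2*m) 1) 0 = (-1)^m \<and>
   coeff (U (2*m) 2) 0 = (if m = 0 then 1 else 2*(-1)^m) \<and>
   coeff (U (2*m) 0) 1 = (if m = 0 then 0 else (-1)^m * (2*real m - 1)) \<and>
   coeff (U (2*m) 1) 1 = (if m = 0 then 0 else - ((-1)^m * (2*real m - 1))) \<and>
   coeff (U (2*m+1) 0) 0 = - ((-1)^m) \<and> coeff (U (2*m+1) 1) 0 = (-1)^m \<and>
   coeff (U (2*m+1) 2) 0 = 0 \<and>
   coeff (U (2*m+1) 0) 1 = (-1)^m * (2*real m + 1) \<and>
   coeff (U (2*m+1) 1) 1 = (-1)^m * (2*real m + 1)"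
proof (induction m)
  case 0
  show ?case by (simp del: A.simps add: U_coeff_rec A.simps(1))
next
  case (Suc m)
  have e1: "2 * Suc m = Suc (2*m+1)" by simp
  have e2: "2 * Suc m + 1 = Suc (Suc (2*m+1))" by simp
  show ?case unfolding e1 e2 using Suc.IH
    by (simp del: A.simps add: U_coeff_rec algebra_simps)
qed

lemma coeff_mult_1: "coeff (p * q) (Suc 0) = coeff p 0 * coeff q (Suc 0) + coeff p (Suc 0) * coeff q 0"
  by (simp add: coeff_mult atMost_Suc algebra_simps)

lemma Z3_expand:
  "(\<Sum>x<3. w3 x * U a x * U b x * U c x) =
     U a 0 * U b 0 * U c 0 - U a (Suc 0) * U b (Suc 0) * U c (Suc 0) + t * (U a 2 * U b 2 * U c 2)"
  by (simp del: A.simps add: numeral_3_eq_3 numeral_2_eq_2 lessThan_Suc w3_def algebra_simps)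

lemma Z3_odd:
  "coeff (\<Sum>x<3. w3 x * U (2*m+1) x * U (2*\<beta>+1) x * U (2*\<gamma>+1) x) 0 = -2 * (-1)^(m+\<beta>+\<gamma>)"
  unfolding Z3_expand
  using U_closed[of m] U_closed[of \<beta>] U_closed[of \<gamma>]
  by (simp del: A.simps add: coeff_mult_0 tmul power_add)

lemma Z3_even:
  assumes "m \<ge> 1"
  shows "coeff (\<Sum>x<3. w3 x * U (2*m) x * U (2*\<beta>+1) x * U (2*\<gamma>+1) x) (Suc 0) =
     2 * (-1)^(m+\<beta>+\<gamma>) * (2*real m - 1 - (2*real \<beta>+1) - (2*real \<gamma>+1))"
proof -
  have m0: "m \<noteq> 0" using assms by simp
  have h: "coeff (U (2*m) 0) 0 = (-1)^m" "coeff (U (2*m) (Suc 0)) 0 = (-1)^m"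
   "coeff (U (2*m) 0) (Suc 0) = (-1)^m * (2*real m - 1)"
   "coeff (U (2*m) (Suc 0)) (Suc 0) = - ((-1)^m * (2*real m - 1))"
    using U_closed[of m] m0 by auto
  have hb: "coeff (U (2*\<beta>+1) 0) 0 = - ((-1)^\<beta>)" "coeff (U (2*\<beta>+1) (Suc 0)) 0 = (-1)^\<beta>"
    "coeff (U (2*\<beta>+1) 2) 0 = 0"
    "coeff (U (2*\<beta>+1) 0) (Suc 0) = (-1)^\<beta> * (2*real \<beta> + 1)"
    "coeff (U (2*\<beta>+1) (Suc 0)) (Suc 0) = (-1)^\<beta> * (2*real \<beta> + 1)"
    using U_closed[of \<beta>] by auto
  have hc: "coeff (U (2*\<gamma>+1) 0) 0 = - ((-1)^\<gamma>)" "coeff (U (2*\<gamma>+1) (Suc 0)) 0 = (-1)^\<gamma>"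
    "coeff (U (2*\<gamma>+1) 2) 0 = 0"
    "coeff (U (2*\<gamma>+1) 0) (Suc 0) = (-1)^\<gamma> * (2*real \<gamma> + 1)"
    "coeff (U (2*\<gamma>+1) (Suc 0)) (Suc 0) = (-1)^\<gamma> * (2*real \<gamma> + 1)"
    using U_closed[of \<gamma>] by auto
  show ?thesis unfolding Z3_expand
    by (simp only: coeff_mult_0 coeff_mult_1 tmul coeff_add coeff_diff coeff_pCons_Suc coeff_pCons_0 h hb hc)
       (simp add: power_add algebra_simps)
qed

lemma SV_insert:
  assumes "j \<in> {1,2,3}" "f j = Suc L"
  shows "SV f = insert (j, Suc L) (SV (f(j:=L)))" "(j, Suc L) \<notin> SV (f(j:=L))"
  using assms by (auto simp: SV_def)

lemma card_leg: "j \<in> {1,2,3} \<Longrightarrow> f j = L \<Longrightarrow> card (SV f) = L + card (SV (f(j:=0)))"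
proof (induction L arbitrary: f)
  case 0 then show ?case by (simp add: fun_upd_idem)
next
  case (Suc L)
  have "card (SV f) = Suc (card (SV (f(j:=L))))"
    using SV_insert[where j=j and f=f and L=L] Suc.prems finite_SV by simp
  also have "card (SV (f(j:=L))) = L + card (SV ((f(j:=L))(j:=0)))"
    by (rule Suc.IH) (use Suc.prems in auto)
  also have "(f(j:=L))(j:=0) = f(j:=0)" by simp
  finally show ?case by simp
qed

lemma card_SV: "card (SV f) = f 1 + f 2 + f 3 + 1"
proof -
  have "card (SV f) = f 1 + card (SV (f(1:=0)))" by (rule card_leg) auto
  also have "card (SV (f(1:=0))) = f 2 + card (SV (f(1:=0,2:=0)))" by (rule card_leg) auto
  also have "card (SV (f(1:=0,2:=0))) = f 3 + card (SV (f(1:=0,2:=0,3:=0)))" by (rule card_leg) auto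
  also have "SV (f(1:=0,2:=0,3:=0)) = {(0,0)}" by (auto simp: SV_def)
  finally show ?thesis by simp
qed

lemma spider_Z':
  assumes "f 1 \<ge> 1" "f 2 \<ge> 1" "f 3 \<ge> 1"
  shows "Z N f (\<lambda>_. w) = (\<Sum>x<N. w x * A w N (\<lambda>_. 1) (f 1) x * A w N (\<lambda>_. 1) (f 2) x * A w N (\<lambda>_. 1) (f 3) x)"
proof -
  obtain a b c where "f 1 = Suc a" "f 2 = Suc b" "f 3 = Suc c"
    using assms by (metis Suc_le_D One_nat_def)
  then show ?thesis using spider_Z[of f a b c N w] by simp
qed

lemma ev_spider:
  assumes "rhom \<phi>" "1 \<le> a" "1 \<le> b" "1 \<le> c"
  shows "ev \<phi> w (chromatic_sym N (spider_V a b c) (spider_E a b c)) =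
     (\<Sum>x<N. w x * A w N (\<lambda>_. 1) a x * A w N (\<lambda>_. 1) b x * A w N (\<lambda>_. 1) c x)"
proof -
  have "ev \<phi> w (chromatic_sym N (spider_V a b c) (spider_E a b c)) = Z N (spider_len a b c) (\<lambda>_. w)"
    unfolding spider_SV spider_SE Z_def using assms(1) finite_SV by (simp add: ev_chrom)
  also have "\<dots> = (\<Sum>x<N. w x * A w N (\<lambda>_. 1) a x * A w N (\<lambda>_. 1) b x * A w N (\<lambda>_. 1) c x)" using assms by (subst spider_Z') (auto simp: spider_len_def)
  finally show ?thesis .
qed

lemma card_spider: "card (spider_V a b c) = a + b + c + 1"
  by (simp add: spider_SV card_SV spider_len_def)

lemma ev_epos:
  assumes "rhom \<phi>" "e_positive V E"
  shows "\<exists>c. (\<forall>lam\<in>partitions (card V). 0 \<le> c lam) \<and> (\<forall>N. ev \<phi> w (chromatic_sym N V E) =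
     (\<Sum>lam\<in>partitions (card V). \<phi> (c lam) * (\<Prod>k\<in>#lam. ev \<phi> w (elem_sym N k))))"
proof -
  obtain c where c: "\<forall>lam\<in>partitions (card V). 0 \<le> c lam"
    "\<forall>N. chromatic_sym N V E = (\<Sum>lam\<in>partitions (card V). Poly_Mapping.single 0 (c lam) * elem_part N lam)"
    using assms(2) unfolding e_positive_def by blast
  show ?thesis
  proof (intro exI conjI allI)
    show "\<forall>lam\<in>partitions (card V). 0 \<le> c lam" by (rule c(1))
    fix N
    show "ev \<phi> w (chromatic_sym N V E) = (\<Sum>lam\<in>partitions (card V). \<phi> (c lam) * (\<Prod>k\<in>#lam. ev \<phi> w (elem_sym N k)))"
      unfolding c(2)[rule_format]
      by (simp add: ev_sum[OF assms(1)] ev_mult[OF assms(1)] ev_single[OF assms(1)] elem_part_def ev_prod_mset[OF assms(1)])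
  qed
qed

lemma rhom_poly: "rhom (\<lambda>r. [:r:])"
  by (simp add: rhom_def one_pCons)

lemma rhom_complex: "rhom (of_real :: real \<Rightarrow> complex)"
  by (simp add: rhom_def)

lemma counts:
  "(\<forall>x\<in>#M. x \<in> {1,2,3}) \<Longrightarrow> (\<Prod>k\<in>#M. sg k) = (-1)^(count M 2 + count M 3) \<and>
     (\<Sum>k\<in>#M. dg k) = count M 1 + count M 3 \<and> sum_mset M = count M 1 + 2 * count M 2 + 3 * count M 3"
proof (induction M)
  case empty then show ?case by simp
next
  case (add x M)
  then have "x = 1 \<or> x = 2 \<or> x = 3" by auto
  then show ?case using add by (auto simp: sg_def dg_def)
qed

lemma sg_zero:
  assumes "\<forall>x\<in>#M. 0 < x" "\<not> (\<forall>x\<in>#M. x \<in> {1,2,3})"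
  shows "(\<Prod>k\<in>#M. sg k) = 0"
proof -
  obtain x where "x \<in># M" "x \<notin> {1,2,3}" using assms(2) by blast
  moreover then have "sg x = 0" using assms(1) by (auto simp: sg_def)
  ultimately show ?thesis by (metis image_eqI prod_mset_zero_iff set_image_mset)
qed

lemma sign0:
  assumes "M \<in> partitions (2*K)"
  shows "0 \<le> (-1)^K * (if (\<Sum>k\<in>#M. dg k) = 0 then (\<Prod>k\<in>#M. sg k) else 0)"
proof (cases "\<forall>x\<in>#M. x \<in> {1,2,3}")
  case True
  from counts[OF True] assms have "(\<Sum>k\<in>#M. dg k) = 0 \<longrightarrow> count M 2 = K \<and> count M 3 = 0"
    by (auto simp: partitions_def)
  then show ?thesis using counts[OF True] by (auto simp: power_add[symmetric])
next
  case False
  have "(\<Prod>k\<in>#M. sg k) = 0" using sg_zero[OF _ False] assms by (auto simp: partitions_def)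
  show ?thesis unfolding \<open>(\<Prod>k\<in>#M. sg k) = 0\<close> by simp
qed

lemma sign1:
  assumes "M \<in> partitions (2*K+1)"
  shows "0 \<le> (-1)^K * (if (\<Sum>k\<in>#M. dg k) = 1 then (\<Prod>k\<in>#M. sg k) else 0)"
proof (cases "\<forall>x\<in>#M. x \<in> {1,2,3}")
  case True
  from counts[OF True] assms have "(\<Sum>k\<in>#M. dg k) = 1 \<longrightarrow> count M 2 + count M 3 = K"
    by (auto simp: partitions_def)
  then show ?thesis using counts[OF True] by (auto simp: power_add[symmetric])
next
  case False
  have "(\<Prod>k\<in>#M. sg k) = 0" using sg_zero[OF _ False] assms by (auto simp: partitions_def)
  show ?thesis unfolding \<open>(\<Prod>k\<in>#M. sg k) = 0\<close> by simp
qed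

lemma const_mult: "[:r:] * p = smult r p" by (simp add: mult_pCons_left)

lemma poly_identity:
  assumes "e_positive (spider_V a b c) (spider_E a b c)" "1 \<le> a" "1 \<le> b" "1 \<le> c"
  shows "\<exists>cc. (\<forall>lam\<in>partitions (a+b+c+1). 0 \<le> cc lam) \<and> (\<forall>j.
     coeff (\<Sum>x<3. w3 x * U a x * U b x * U c x) j =
     (\<Sum>lam\<in>partitions (a+b+c+1). cc lam * (if (\<Sum>k\<in>#lam. dg k) = j then (\<Prod>k\<in>#lam. sg k) else 0)))"
proof -
  obtain cc where cc: "\<forall>lam\<in>partitions (a+b+c+1). 0 \<le> cc lam"
    "\<forall>N. ev (\<lambda>r. [:r:]) w3 (chromatic_sym N (spider_V a b c) (spider_E a b c)) =
     (\<Sum>lam\<in>partitions (a+b+c+1). [:cc lam:] * (\<Prod>k\<in>#lam. ev (\<lambda>r. [:r:]) w3 (elem_sym N k)))"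
    using ev_epos[OF rhom_poly assms(1), of w3] unfolding card_spider by blast
  have "(\<Sum>x<3. w3 x * U a x * U b x * U c x) =
     (\<Sum>lam\<in>partitions (a+b+c+1). [:cc lam:] * monom (\<Prod>k\<in>#lam. sg k) (\<Sum>k\<in>#lam. dg k))"
    using cc(2)[rule_format, of 3] ev_spider[OF rhom_poly assms(2-4), of w3 3]
    by (simp add: ev_esym_coeff[OF rhom_poly] G3_coeff monom_prod_mset del: A.simps)
  then show ?thesis using cc(1)
    by (intro exI[of _ cc]) (simp add: coeff_sum const_mult del: A.simps)
qed

lemma case_odd:
  assumes "e_positive (spider_V a b c) (spider_E a b c)" "odd a" "odd b" "odd c"
  shows False
proof -
  obtain m where m: "a = 2*m+1" using assms(2) oddE by blast
  obtain \<beta> where \<beta>: "b = 2*\<beta>+1" using assms(3) oddE by blast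
  obtain \<gamma> where \<gamma>: "c = 2*\<gamma>+1" using assms(4) oddE by blast
  obtain cc where cc: "\<forall>lam\<in>partitions (a+b+c+1). 0 \<le> cc lam" "\<forall>j.
     coeff (\<Sum>x<3. w3 x * U a x * U b x * U c x) j =
     (\<Sum>lam\<in>partitions (a+b+c+1). cc lam * (if (\<Sum>k\<in>#lam. dg k) = j then (\<Prod>k\<in>#lam. sg k) else 0))"
    using poly_identity[OF assms(1)] m \<beta> \<gamma> by auto
  define K where "K = m + \<beta> + \<gamma> + 2"
  have n: "a + b + c + 1 = 2 * K" by (simp add: K_def m \<beta> \<gamma>)
  have "(-1)^K * coeff (\<Sum>x<3. w3 x * U a x * U b x * U c x) 0 = -2 * (-1)^(K + m + \<beta> + \<gamma>)"
    unfolding m \<beta> \<gamma> Z3_odd by (simp add: power_add)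
  also have "K + m + \<beta> + \<gamma> = 2 * (m + \<beta> + \<gamma> + 1)" by (simp add: K_def)
  finally have lhs: "(-1)^K * coeff (\<Sum>x<3. w3 x * U a x * U b x * U c x) 0 = -2" by simp
  have "0 \<le> (\<Sum>lam\<in>partitions (2*K). cc lam * ((-1)^K * (if (\<Sum>k\<in>#lam. dg k) = 0 then (\<Prod>k\<in>#lam. sg k) else 0)))"
  proof (intro sum_nonneg)
    fix lam assume lam: "lam \<in> partitions (2*K)"
    show "0 \<le> cc lam * ((-1)^K * (if (\<Sum>k\<in>#lam. dg k) = 0 then (\<Prod>k\<in>#lam. sg k) else 0))"
      by (rule mult_nonneg_nonneg) (use cc(1) n lam in simp, rule sign0[OF lam])
  qed
  also have "\<dots> = (-1)^K * coeff (\<Sum>x<3. w3 x * U a x * U b x * U c x) 0"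
    unfolding cc(2)[rule_format] n by (simp add: sum_distrib_left mult_ac del: A.simps)
  finally show False using lhs by simp
qed

lemma case_even:
  assumes "e_positive (spider_V a b c) (spider_E a b c)" "even a" "odd b" "odd c" "b + c < a"
  shows False
proof -
  obtain m where m: "a = 2*m" using assms(2) by blast
  obtain \<beta> where \<beta>: "b = 2*\<beta>+1" using assms(3) oddE by blast
  obtain \<gamma> where \<gamma>: "c = 2*\<gamma>+1" using assms(4) oddE by blast
  have m1: "m \<ge> 1" using assms(5) m by simp
  have ineq: "\<beta> + \<gamma> + 1 < m" using assms(5) m \<beta> \<gamma> by simp
  obtain cc where cc: "\<forall>lam\<in>partitions (a+b+c+1). 0 \<le> cc lam" "\<forall>j.
     coeff (\<Sum>x<3. w3 x * U a x * U b x * U c x) j =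
     (\<Sum>lam\<in>partitions (a+b+c+1). cc lam * (if (\<Sum>k\<in>#lam. dg k) = j then (\<Prod>k\<in>#lam. sg k) else 0))"
    using poly_identity[OF assms(1)] m1 m \<beta> \<gamma> by auto
  define K where "K = m + \<beta> + \<gamma> + 1"
  have n: "a + b + c + 1 = 2 * K + 1" by (simp add: K_def m \<beta> \<gamma>)
  have "(-1)^K * coeff (\<Sum>x<3. w3 x * U a x * U b x * U c x) (Suc 0) =
     2 * (-1)^(K + m + \<beta> + \<gamma>) * (2*real m - 1 - (2*real \<beta>+1) - (2*real \<gamma>+1))"
    unfolding m \<beta> \<gamma> Z3_even[OF m1] by (simp add: power_add)
  also have "K + m + \<beta> + \<gamma> = 2 * (m + \<beta> + \<gamma>) + 1" by (simp add: K_def)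
  finally have lhs: "(-1)^K * coeff (\<Sum>x<3. w3 x * U a x * U b x * U c x) (Suc 0) =
     - 2 * (2*real m - 1 - (2*real \<beta>+1) - (2*real \<gamma>+1))" by simp
  have "0 \<le> (\<Sum>lam\<in>partitions (2*K+1). cc lam * ((-1)^K * (if (\<Sum>k\<in>#lam. dg k) = 1 then (\<Prod>k\<in>#lam. sg k) else 0)))"
  proof (intro sum_nonneg)
    fix lam assume lam: "lam \<in> partitions (2*K+1)"
    show "0 \<le> cc lam * ((-1)^K * (if (\<Sum>k\<in>#lam. dg k) = 1 then (\<Prod>k\<in>#lam. sg k) else 0))"
      by (rule mult_nonneg_nonneg) (use cc(1) n lam in simp, rule sign1[OF lam])
  qed
  also have "\<dots> = (-1)^K * coeff (\<Sum>x<3. w3 x * U a x * U b x * U c x) (Suc 0)"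
    unfolding cc(2)[rule_format] n by (simp add: sum_distrib_left mult_ac del: A.simps)
  finally show False using lhs ineq by simp
qed

definition rt :: "nat \<Rightarrow> complex" where "rt q = cis (2 * pi / real q)"

lemma pow_swap: "((x::'a::comm_monoid_mult) ^ d) ^ k = (x ^ k) ^ d"
  by (simp add: power_mult[symmetric] mult.commute)

lemma rt_pow: "rt q ^ k = cis (2 * pi * real k / real q)"
  by (simp add: rt_def DeMoivre mult_ac)

lemma rt_pow_q: "q > 0 \<Longrightarrow> rt q ^ q = 1"
  by (simp add: rt_pow)

lemma rt_pow_dvd: "q > 0 \<Longrightarrow> q dvd k \<Longrightarrow> rt q ^ k = 1"
  by (auto elim!: dvdE simp: power_mult rt_pow_q)

lemma rt_pow_eq_1: assumes "q > 0" "rt q ^ k = 1" shows "q dvd k"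
proof -
  have "Re (rt q ^ k) = 1" using assms(2) by simp
  then have "cos (2 * pi * real k / real q) = 1" unfolding rt_pow by simp
  then obtain n :: int where "2 * pi * real k / real q = n * 2 * pi" by (auto simp: cos_one_2pi_int)
  then have "real k = real_of_int n * real q" using assms(1) by (simp add: field_simps)
  then have "real_of_int (int k) = real_of_int (n * int q)" by simp
  then have "int k = n * int q" by (simp only: of_int_eq_iff)
  then have "int q dvd int k" by simp
  then show ?thesis by simp
qed

lemma geom_zero:
  fixes x :: complex
  assumes "x ^ q = 1" "x \<noteq> 1"
  shows "(\<Sum>d<q. x ^ d) = 0"
  using assms by (simp add: geometric_sum)

lemma psum_rt:
  assumes "q > 0"
  shows "(\<Sum>d<q. (rt q ^ d) ^ k) = (if q dvd k then of_nat q else 0)"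
proof (cases "q dvd k")
  case True
  then have "(rt q ^ d) ^ k = 1" for d
    using True by (subst pow_swap) (simp add: rt_pow_dvd[OF assms])
  then show ?thesis using True by simp
next
  case False
  have "(\<Sum>d<q. (rt q ^ d) ^ k) = (\<Sum>d<q. (rt q ^ k) ^ d)"
    by (simp add: pow_swap)
  also have "\<dots> = 0"
  proof (rule geom_zero)
    show "(rt q ^ k) ^ q = 1" by (subst pow_swap) (simp add: rt_pow_q[OF assms])
    show "rt q ^ k \<noteq> 1" using False rt_pow_eq_1[OF assms] by blast
  qed
  finally show ?thesis using False by simp
qed

lemma prod_rt: "q > 0 \<Longrightarrow> (\<Prod>i<q. rt q ^ i) = (-1) ^ (q + 1)"
proof -
  assume q: "q > 0"
  then obtain r where r: "q = Suc r" using gr0_implies_Suc by blast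
  have "(\<Prod>i<q. rt q ^ i) = rt q ^ (\<Sum>i<q. i)" by (simp add: power_sum)
  also have s: "(\<Sum>i<q. i) * 2 = q * r" unfolding r by (induction r) (auto simp: algebra_simps)
  have "2 * pi * real (\<Sum>i<q. i) / real q = real r * pi"
  proof -
    have "real ((\<Sum>i<q. i) * 2) = real (q * r)" using s by simp
    then have "2 * real (\<Sum>i<q. i) = real q * real r" by simp
    then show ?thesis using q by (simp add: field_simps)
  qed
  then have "rt q ^ (\<Sum>i<q. i) = cis (real r * pi)" by (simp add: rt_pow)
  also have "\<dots> = (-1) ^ r" by (simp add: DeMoivre[symmetric])
  also have "\<dots> = (-1) ^ (q + 1)" by (simp add: r)
  finally show ?thesis .
qed


lemma smod: "i < q \<Longrightarrow> Suc i mod q = (if Suc i = q then 0 else Suc i)"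
  by auto

lemma esym_rt_shift:
  assumes q: "q > 0"
  shows "esym (\<lambda>i. rt q ^ i) {..<q} k = rt q ^ k * esym (\<lambda>i. rt q ^ i) {..<q} k"
proof -
  let ?s = "\<lambda>i. Suc i mod q"
  let ?I = "{..<q}"
  let ?w = "\<lambda>i. rt q ^ i"
  let ?F = "{S. S \<subseteq> ?I \<and> card S = k}"
  have inj: "inj_on ?s ?I"
  proof (rule inj_onI)
    fix i j assume "i \<in> ?I" "j \<in> ?I" "?s i = ?s j"
    then show "i = j" using smod[of i q] smod[of j q] by (auto split: if_splits)
  qed
  have img: "?s ` ?I = ?I" by (rule endo_inj_surj) (use q inj in auto)
  have bs: "bij_betw ?s ?I ?I" using inj img by (simp add: bij_betw_def)
  have ws: "?w (?s i) = rt q * ?w i" if "i < q" for i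
    using smod[OF that] rt_pow_q[OF q] by auto
  have bP: "bij_betw (image ?s) (Pow ?I) (Pow ?I)" by (rule bij_betw_image_Pow[OF bs])
  have imF: "image ?s ` ?F = ?F"
  proof (intro equalityI subsetI)
    fix T assume "T \<in> image ?s ` ?F"
    then obtain S where S: "S \<in> ?F" "T = ?s ` S" by (rule imageE)
    have "inj_on ?s S" using inj S(1) by (auto intro: inj_on_subset)
    then show "T \<in> ?F" using S img by (auto simp: card_image)
  next
    fix T assume T: "T \<in> ?F"
    then have "T \<in> Pow ?I" by simp
    moreover have "image ?s ` Pow ?I = Pow ?I" using bP by (simp add: bij_betw_def)
    ultimately obtain S where S: "S \<in> Pow ?I" "T = ?s ` S" by (metis imageE)
    have "inj_on ?s S" using inj S(1) by (auto intro: inj_on_subset)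
    then have "card S = k" using S T by (auto simp: card_image)
    then show "T \<in> image ?s ` ?F" using S by auto
  qed
  have bF: "bij_betw (image ?s) ?F ?F"
    by (rule bij_betw_subset[OF bP _ imF]) auto
  have "esym ?w ?I k = (\<Sum>S\<in>?F. \<Prod>i\<in>?s ` S. ?w i)"
    unfolding esym_def by (rule sum.reindex_bij_betw[OF bF, symmetric])
  also have "\<dots> = (\<Sum>S\<in>?F. \<Prod>i\<in>S. ?w (?s i))"
  proof (intro sum.cong refl)
    fix S assume "S \<in> ?F"
    then have "inj_on ?s S" using inj by (auto intro: inj_on_subset)
    then show "(\<Prod>i\<in>?s ` S. ?w i) = (\<Prod>i\<in>S. ?w (?s i))" by (simp add: prod.reindex)
  qed
  also have "\<dots> = (\<Sum>S\<in>?F. rt q ^ k * (\<Prod>i\<in>S. ?w i))"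
  proof (intro sum.cong refl)
    fix S assume S: "S \<in> ?F"
    have "(\<Prod>i\<in>S. ?w (?s i)) = (\<Prod>i\<in>S. rt q * ?w i)"
      using S ws by (intro prod.cong refl) auto
    also have "\<dots> = rt q ^ card S * (\<Prod>i\<in>S. ?w i)" by (simp add: prod.distrib)
    finally show "(\<Prod>i\<in>S. ?w (?s i)) = rt q ^ k * (\<Prod>i\<in>S. ?w i)" using S by simp
  qed
  also have "\<dots> = rt q ^ k * esym ?w ?I k" by (simp add: esym_def sum_distrib_left)
  finally show ?thesis .
qed


lemma esym_rt:
  assumes q: "q > 0"
  shows "esym (\<lambda>i. rt q ^ i) {..<q} k = (if k = 0 then 1 else if k = q then (-1)^(q+1) else 0)"
proof -
  consider "k = 0" | "0 < k" "k < q" | "k = q" | "q < k" by linarith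
  then show ?thesis
  proof cases
    case 1 then show ?thesis by (simp add: esym_0)
  next
    case 2
    have "\<not> q dvd k" using 2 by (auto dest: dvd_imp_le)
    then have "rt q ^ k \<noteq> 1" using rt_pow_eq_1[OF q] by blast
    moreover have "(rt q ^ k - 1) * esym (\<lambda>i. rt q ^ i) {..<q} k = 0"
      using esym_rt_shift[OF q, of k] by (simp add: algebra_simps)
    ultimately show ?thesis using 2 by simp
  next
    case 3
    have "{S. S \<subseteq> {..<q} \<and> card S = q} = {{..<q}}"
    proof (intro equalityI subsetI)
      fix S assume "S \<in> {S. S \<subseteq> {..<q} \<and> card S = q}"
      then have "S = {..<q}" by (intro card_subset_eq) auto
      then show "S \<in> {{..<q}}" by simp
    qed auto
    then show ?thesis using 3 q prod_rt[OF q] by (simp add: esym_def)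
  next
    case 4
    have e4: "{S. S \<subseteq> {..<q} \<and> card S = k} = {}"
    proof (rule equals0I)
      fix S assume "S \<in> {S. S \<subseteq> {..<q} \<and> card S = k}"
      then have S: "S \<subseteq> {..<q}" "card S = k" by simp_all
      have "card S \<le> card {..<q}" by (rule card_mono[OF _ S(1)]) simp
      then show False using S(2) 4 by simp
    qed
    show ?thesis using 4 unfolding esym_def e4 by simp
  qed
qed

lemma Gq: "q > 0 \<Longrightarrow> (\<Prod>i<q. [:1, rt q ^ i:]) = 1 + monom ((-1)^(q+1)) q"
proof -
  assume q: "q > 0"
  show ?thesis
  proof (rule poly_eqI)
    fix n
    have "coeff (\<Prod>i<q. [:1, rt q ^ i:]) n = (if n = 0 then 1 else if n = q then (-1)^(q+1) else 0)"
      by (subst vieta[OF finite_lessThan]) (rule esym_rt[OF q])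
    moreover have "coeff (1 + monom ((-1)^(q+1)) q) n = (if n = 0 then 1 else 0) + (if q = n then (-1)^(q+1) else 0)"
      by (simp only: coeff_add coeff_monom coeff_1 of_bool_def)
    ultimately show "coeff (\<Prod>i<q. [:1, rt q ^ i:]) n = coeff (1 + monom ((-1)^(q+1)) q) n"
      using q by auto
  qed
qed

lemma counts3:
  assumes "\<forall>x\<in>#M. x \<in> {u1,u2,u3}" "u1 \<noteq> u2" "u1 \<noteq> u3" "u2 \<noteq> u3"
  shows "(\<Prod>k\<in>#M. (h k :: real)) = h u1 ^ count M u1 * h u2 ^ count M u2 * h u3 ^ count M u3 \<and>
     sum_mset M = u1 * count M u1 + u2 * count M u2 + u3 * count M u3"
  using assms(1)
proof (induction M)
  case empty then show ?case by simp
next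
  case (add x M)
  then have "x = u1 \<or> x = u2 \<or> x = u3" by auto
  then show ?case using add assms(2-4) by (auto simp: algebra_simps)
qed

lemma dioph:
  fixes p x y z :: nat
  assumes "p \<ge> 2" "x*p + y*(p+1) + z*(2*p+1) = 2*p+1"
  shows "(x = 0 \<and> y = 0 \<and> z = 1) \<or> (x = 1 \<and> y = 1 \<and> z = 0)"
proof -
  have z: "z \<le> 1"
  proof (rule ccontr)
    assume "\<not> z \<le> 1"
    then have "z*(2*p+1) \<ge> 2*(2*p+1)" by (intro mult_right_mono) auto
    moreover have "z*(2*p+1) \<le> 2*p+1" using assms(2) by (metis le_add2)
    ultimately have "2*(2*p+1) \<le> 2*p+1" by (rule order_trans)
    then show False by simp
  qed
  show ?thesis
  proof (cases "z = 1")
    case True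
    then have "x*p + y*(p+1) = 0" using assms by simp
    then show ?thesis using True assms(1) by simp
  next
    case False
    then have z0: "z = 0" using z by simp
    then have e: "(x+y)*p + y = 2*p+1" using assms(2) by (simp add: algebra_simps)
    have "x + y = 2"
    proof (rule ccontr)
      assume ne: "x + y \<noteq> 2"
      show False
      proof (cases "x + y \<ge> 3")
        case True
        then have "(x+y)*p \<ge> 3*p" by (intro mult_right_mono) auto
        then show False using e assms(1) by linarith
      next
        case False
        then have "x + y \<le> 1" using ne by simp
        then have "(x+y)*p \<le> 1*p" by (intro mult_right_mono) auto
        moreover have "y \<le> 1" using \<open>x + y \<le> 1\<close> by simp
        ultimately show False using e assms(1) by linarith
      qed
    qed
    then have "y = 1" using e by simp
    then show ?thesis using \<open>x + y = 2\<close> z0 by simp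
  qed
qed

definition h1 :: "nat \<Rightarrow> nat \<Rightarrow> real" where
  "h1 p k = (if k = 0 then 1 else 0) + (if k = 2*p+1 then 1 else 0)"
definition h2 :: "nat \<Rightarrow> nat \<Rightarrow> real" where
  "h2 p k = (if k = 0 then 1 else 0) + (if k = p then (-1)^(p+1) else 0) + (if k = p+1 then (-1)^p else 0)
     + (if k = 2*p+1 then -1 else 0)"

lemma part_ineq:
  assumes p: "p \<ge> 2" and M: "M \<in> partitions (2*p+1)"
  shows "(\<Prod>k\<in>#M. h1 p k) + (\<Prod>k\<in>#M. h2 p k) \<le> 0"
proof (cases "\<forall>x\<in>#M. x \<in> {p, p+1, 2*p+1}")
  case True
  have d: "p \<noteq> p+1" "p \<noteq> 2*p+1" "p+1 \<noteq> 2*p+1" using p by auto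
  note c1 = counts3[OF True d, of "h1 p"]
  note c2 = counts3[OF True d, of "h2 p"]
  have s: "count M p * p + count M (p+1) * (p+1) + count M (2*p+1) * (2*p+1) = 2*p+1"
    using c1 M by (simp add: partitions_def algebra_simps)
  have h1v: "h1 p p = 0" "h1 p (p+1) = 0" "h1 p (2*p+1) = 1" using p by (auto simp: h1_def)
  have h2v: "h2 p p = (-1)^(p+1)" "h2 p (p+1) = (-1)^p" "h2 p (2*p+1) = -1" using p by (auto simp: h2_def)
  from dioph[OF p s] show ?thesis
  proof
    assume "count M p = 0 \<and> count M (p+1) = 0 \<and> count M (2*p+1) = 1"
    then show ?thesis unfolding c1[THEN conjunct1] c2[THEN conjunct1] using h1v h2v by simp
  next
    assume "count M p = 1 \<and> count M (p+1) = 1 \<and> count M (2*p+1) = 0"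
    then show ?thesis unfolding c1[THEN conjunct1] c2[THEN conjunct1] using h1v h2v by simp
  qed
next
  case False
  then obtain x where x: "x \<in># M" "x \<notin> {p, p+1, 2*p+1}" by blast
  have "x > 0" using x(1) M by (auto simp: partitions_def)
  then have "h1 p x = 0" "h2 p x = 0" using x(2) by (auto simp: h1_def h2_def)
  then have z1: "(\<Prod>k\<in>#M. h1 p k) = 0" and z2: "(\<Prod>k\<in>#M. h2 p k) = 0" using x(1)
    by (metis image_eqI prod_mset_zero_iff set_image_mset)+
  show ?thesis unfolding z1 z2 by simp
qed

lemma sum_split_lt: fixes m j :: nat shows "(\<Sum>d<m+j. f d) = (\<Sum>d<m. f d) + (\<Sum>d<j. f (m+d))"
  by (induction j) (auto simp: add_ac)

lemma prod_split_lt: fixes m j :: nat shows "(\<Prod>d<m+j. f d) = (\<Prod>d<m. f d) * (\<Prod>d<j. f (m+d))"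
  by (induction j) (auto simp: mult_ac)

lemma A_pow:
  fixes w :: "nat \<Rightarrow> 'a::comm_ring_1"
  assumes ps: "\<forall>k. 1 \<le> k \<and> k \<le> K \<longrightarrow> (\<Sum>d<N. w d ^ k) = 0" and "L \<le> K" "x < N"
  shows "A w N (\<lambda>_. 1) L x = (-1)^L * w x ^ L"
  using assms(2,3)
proof (induction L arbitrary: x)
  case 0 then show ?case by simp
next
  case (Suc L)
  have "A w N (\<lambda>_. 1) (Suc L) x = (\<Sum>d\<in>{..<N}-{x}. w d * ((-1)^L * w d ^ L))"
    using Suc by (auto intro!: sum.cong)
  also have "\<dots> = (-1)^L * (\<Sum>d\<in>{..<N}-{x}. w d ^ Suc L)"
    by (simp add: sum_distrib_left mult_ac)
  also have "(\<Sum>d\<in>{..<N}-{x}. w d ^ Suc L) = (\<Sum>d<N. w d ^ Suc L) - w x ^ Suc L"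
    using Suc.prems by (simp add: sum_diff1)
  also have "(\<Sum>d<N. w d ^ Suc L) = 0" using ps Suc.prems by auto
  finally show ?case by simp
qed

lemma spider_pow:
  fixes w :: "nat \<Rightarrow> complex"
  assumes ps: "\<forall>k. 1 \<le> k \<and> k \<le> K \<longrightarrow> (\<Sum>d<N. w d ^ k) = 0"
    and "1 \<le> a" "1 \<le> b" "1 \<le> c" "a \<le> K" "b \<le> K" "c \<le> K" "even (a+b+c)"
  shows "ev of_real w (chromatic_sym N (spider_V a b c) (spider_E a b c)) = (\<Sum>x<N. w x ^ (a+b+c+1))"
proof -
  have "ev of_real w (chromatic_sym N (spider_V a b c) (spider_E a b c)) =
     (\<Sum>x<N. w x * A w N (\<lambda>_. 1) a x * A w N (\<lambda>_. 1) b x * A w N (\<lambda>_. 1) c x)"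
    by (rule ev_spider[OF rhom_complex assms(2-4)])
  also have "\<dots> = (\<Sum>x<N. (-1)^(a+b+c) * w x ^ (a+b+c+1))"
    using A_pow[OF ps] assms(5-7) by (intro sum.cong refl) (simp add: power_add mult_ac)
  also have "\<dots> = (\<Sum>x<N. w x ^ (a+b+c+1))" using assms(8) by simp
  finally show ?thesis .
qed

lemma ev_epos2:
  assumes "rhom \<phi>" "e_positive V E"
  shows "\<exists>c. (\<forall>lam\<in>partitions (card V). 0 \<le> c lam) \<and> (\<forall>N w. ev \<phi> w (chromatic_sym N V E) =
     (\<Sum>lam\<in>partitions (card V). \<phi> (c lam) * (\<Prod>k\<in>#lam. ev \<phi> w (elem_sym N k))))"
proof -
  obtain c where c: "\<forall>lam\<in>partitions (card V). 0 \<le> c lam"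
    "\<forall>N. chromatic_sym N V E = (\<Sum>lam\<in>partitions (card V). Poly_Mapping.single 0 (c lam) * elem_part N lam)"
    using assms(2) unfolding e_positive_def by blast
  show ?thesis
  proof (intro exI conjI allI)
    show "\<forall>lam\<in>partitions (card V). 0 \<le> c lam" by (rule c(1))
    fix N w
    show "ev \<phi> w (chromatic_sym N V E) = (\<Sum>lam\<in>partitions (card V). \<phi> (c lam) * (\<Prod>k\<in>#lam. ev \<phi> w (elem_sym N k)))"
      unfolding c(2)[rule_format]
      by (simp add: ev_sum[OF assms(1)] ev_mult[OF assms(1)] ev_single[OF assms(1)] elem_part_def ev_prod_mset[OF assms(1)])
  qed
qed

lemma of_real_prod_mset: "(\<Prod>k\<in>#M. (of_real (h k) :: complex)) = of_real (\<Prod>k\<in>#M. h k)"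
  by (induction M) auto

definition w1 :: "nat \<Rightarrow> nat \<Rightarrow> complex" where "w1 p d = rt (2*p+1) ^ d"
definition w2 :: "nat \<Rightarrow> nat \<Rightarrow> complex" where
  "w2 p d = (if d < p+1 then rt (p+1) ^ d else rt p ^ (d - (p+1)))"

lemma psum_w1: "(\<Sum>d<2*p+1. w1 p d ^ k) = (if (2*p+1) dvd k then of_nat (2*p+1) else 0)"
  unfolding w1_def by (rule psum_rt) simp

lemma psum_w2:
  assumes "p \<ge> 1"
  shows "(\<Sum>d<2*p+1. w2 p d ^ k) = (if (p+1) dvd k then of_nat (p+1) else 0) + (if p dvd k then of_nat p else 0)"
proof -
  have e: "2*p+1 = (p+1)+p" by simp
  have "(\<Sum>d<2*p+1. w2 p d ^ k) = (\<Sum>d<(p+1)+p. w2 p d ^ k)" by (subst e) (rule refl)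
  also have "\<dots> = (\<Sum>d<p+1. (rt (p+1) ^ d) ^ k) + (\<Sum>d<p. (rt p ^ d) ^ k)"
    unfolding sum_split_lt by (simp add: w2_def)
  also have "\<dots> = (if (p+1) dvd k then of_nat (p+1) else 0) + (if p dvd k then of_nat p else 0)"
  proof -
    have r1: "(\<Sum>d<p+1. (rt (p+1) ^ d) ^ k) = (if (p+1) dvd k then of_nat (p+1) else 0)" by (rule psum_rt) simp
    have r2: "(\<Sum>d<p. (rt p ^ d) ^ k) = (if p dvd k then of_nat p else 0)" by (rule psum_rt) (use assms in simp)
    show ?thesis unfolding r1 r2 by (rule refl)
  qed
  finally show ?thesis .
qed

lemma coeff_G1:
  "coeff (\<Prod>i<2*p+1. [:1, w1 p i:]) k = of_real (h1 p k)"
proof -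
  have "(\<Prod>i<2*p+1. [:1, w1 p i:]) = 1 + monom ((-1)^(2*p+1+1)) (2*p+1)"
    unfolding w1_def by (rule Gq) simp
  then show ?thesis by (simp add: h1_def)
qed

lemma coeff_G2:
  assumes p: "p \<ge> 2"
  shows "coeff (\<Prod>i<2*p+1. [:1, w2 p i:]) k = of_real (h2 p k)"
proof -
  have e: "2*p+1 = (p+1)+p" by simp
  have "(\<Prod>i<2*p+1. [:1, w2 p i:]) = (\<Prod>i<(p+1)+p. [:1, w2 p i:])" by (subst e) (rule refl)
  also have "\<dots> = (\<Prod>i<p+1. [:1, rt (p+1) ^ i:]) * (\<Prod>i<p. [:1, rt p ^ i:])"
    unfolding prod_split_lt by (simp add: w2_def)
  also have "\<dots> = (1 + monom ((-1)^(p+1+1)) (p+1)) * (1 + monom ((-1)^(p+1)) p)"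
  proof -
    have g1: "(\<Prod>i<p+1. [:1, rt (p+1) ^ i:]) = 1 + monom ((-1)^(p+1+1)) (p+1)" by (rule Gq) simp
    have g2: "(\<Prod>i<p. [:1, rt p ^ i:]) = 1 + monom ((-1)^(p+1)) p" by (rule Gq) (use p in simp)
    show ?thesis unfolding g1 g2 by (rule refl)
  qed
  also have "\<dots> = 1 + monom ((-1)^(p+1+1)) (p+1) + monom ((-1)^(p+1)) p + monom ((-1)^(p+1+1) * (-1)^(p+1)) (2*p+1)"
    by (simp add: algebra_simps mult_monom mult_2_right)
  also have "(-1)^(p+1+1) * (-1)^(p+1) = (-1 :: complex)"
    by (simp add: power_add[symmetric])
  finally have G: "(\<Prod>i<2*p+1. [:1, w2 p i:]) = 1 + monom ((-1)^(p+1+1)) (p+1) + monom ((-1)^(p+1)) p + monom (-1) (2*p+1)" .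
  show ?thesis unfolding G using p by (auto simp: h2_def coeff_1)
qed

lemma ndvd1: "p \<ge> 1 \<Longrightarrow> \<not> (p+1) dvd (2*p+1::nat)"
proof
  assume p: "p \<ge> 1" and d: "(p+1) dvd (2*p+1)"
  have "(p+1) dvd (2*(p+1))" by (rule dvd_triv_right)
  then have "(p+1) dvd (2*(p+1) - (2*p+1))" using d by (rule dvd_diff_nat)
  then have "(p+1) dvd 1" by simp
  then show False using p by simp
qed

lemma ndvd2: "p \<ge> 2 \<Longrightarrow> \<not> p dvd (2*p+1::nat)"
proof
  assume p: "p \<ge> 2" and d: "p dvd (2*p+1)"
  have pp: "p dvd 2*p" by (rule dvd_triv_right)
  have "p dvd 1" using d by (simp only: dvd_add_right_iff[OF pp])
  then show False using p by simp
qed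

lemma case_mid:
  assumes epos: "e_positive (spider_V a b c) (spider_E a b c)" and ea: "even a" and ob: "odd b" and oc: "odd c"
    and lt: "a < b + c" and ba: "b \<le> a" and cb: "c \<le> b" and c1: "1 \<le> c"
  shows False
proof -
  have "even (a + b + c)" using ea ob oc by simp
  then obtain p where p: "a + b + c = 2*p" by blast
  have "a \<noteq> 1" using ea by auto
  then have a2: "a \<ge> 2" using ba cb c1 by linarith
  have p2: "p \<ge> 2" using p a2 lt by linarith
  have ap: "a \<le> p - 1" using p lt by linarith
  define n where "n = 2*p+1"
  have cardV: "card (spider_V a b c) = n" using p by (simp add: card_spider n_def)
  have ex: "\<exists>cc. (\<forall>lam\<in>partitions n. 0 \<le> cc lam) \<and> (\<forall>N (w::nat \<Rightarrow> complex). ev of_real w (chromatic_sym N (spider_V a b c) (spider_E a b c)) =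
     (\<Sum>lam\<in>partitions n. of_real (cc lam) * (\<Prod>k\<in>#lam. ev of_real w (elem_sym N k))))"
    using ev_epos2[OF rhom_complex epos] unfolding cardV .
  from ex obtain cc where ccc: "(\<forall>lam\<in>partitions n. 0 \<le> cc lam) \<and> (\<forall>N (w::nat \<Rightarrow> complex). ev of_real w (chromatic_sym N (spider_V a b c) (spider_E a b c)) =
     (\<Sum>lam\<in>partitions n. of_real (cc lam) * (\<Prod>k\<in>#lam. ev of_real w (elem_sym N k))))" ..
  note cc = ccc[THEN conjunct1] ccc[THEN conjunct2]
  have ps1: "\<forall>k. 1 \<le> k \<and> k \<le> 2*p \<longrightarrow> (\<Sum>d<2*p+1. w1 p d ^ k) = 0"
  proof (intro allI impI)
    fix k assume k: "1 \<le> k \<and> k \<le> 2*p"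
    then have "\<not> (2*p+1) dvd k" by (auto dest: dvd_imp_le)
    then show "(\<Sum>d<2*p+1. w1 p d ^ k) = 0" unfolding psum_w1 by simp
  qed
  have "ev of_real (w1 p) (chromatic_sym n (spider_V a b c) (spider_E a b c)) = (\<Sum>x<2*p+1. w1 p x ^ (a+b+c+1))"
    unfolding n_def by (rule spider_pow[OF ps1]) (use p ba cb c1 ap \<open>even (a+b+c)\<close> in auto)
  also have "\<dots> = of_nat n" unfolding p n_def psum_w1 by simp
  finally have X1: "ev of_real (w1 p) (chromatic_sym n (spider_V a b c) (spider_E a b c)) = of_nat n" .
  have ps2: "\<forall>k. 1 \<le> k \<and> k \<le> p - 1 \<longrightarrow> (\<Sum>d<2*p+1. w2 p d ^ k) = 0"
  proof (intro allI impI)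
    fix k assume k: "1 \<le> k \<and> k \<le> p - 1"
    then have "\<not> (p+1) dvd k" "\<not> p dvd k" by (auto dest: dvd_imp_le)
    then show "(\<Sum>d<2*p+1. w2 p d ^ k) = 0" using p2 by (subst psum_w2) auto
  qed
  have "ev of_real (w2 p) (chromatic_sym n (spider_V a b c) (spider_E a b c)) = (\<Sum>x<2*p+1. w2 p x ^ (a+b+c+1))"
    unfolding n_def by (rule spider_pow[OF ps2]) (use p ba cb c1 ap \<open>even (a+b+c)\<close> in auto)
  also have "\<dots> = 0" unfolding p using p2 ndvd1[of p] ndvd2[OF p2] by (subst psum_w2) auto
  finally have X2: "ev of_real (w2 p) (chromatic_sym n (spider_V a b c) (spider_E a b c)) = 0" .
  have E1: "ev of_real (w1 p) (elem_sym n k) = of_real (h1 p k)" for k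
    unfolding n_def ev_esym_coeff[OF rhom_complex] by (rule coeff_G1)
  have E2: "ev of_real (w2 p) (elem_sym n k) = of_real (h2 p k)" for k
    unfolding n_def ev_esym_coeff[OF rhom_complex] by (rule coeff_G2[OF p2])
  have S1: "of_nat n = (of_real (\<Sum>lam\<in>partitions n. cc lam * (\<Prod>k\<in>#lam. h1 p k)) :: complex)"
    using X1 cc(2)[rule_format, of "w1 p" n] by (simp add: E1 of_real_prod_mset)
  have S2: "0 = (of_real (\<Sum>lam\<in>partitions n. cc lam * (\<Prod>k\<in>#lam. h2 p k)) :: complex)"
    using X2 cc(2)[rule_format, of "w2 p" n] by (simp add: E2 of_real_prod_mset)
  have "(of_real (real n) :: complex) = of_real (\<Sum>lam\<in>partitions n. cc lam * ((\<Prod>k\<in>#lam. h1 p k) + (\<Prod>k\<in>#lam. h2 p k)))"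
    using S1 S2 by (simp add: sum.distrib distrib_left)
  then have eq: "real n = (\<Sum>lam\<in>partitions n. cc lam * ((\<Prod>k\<in>#lam. h1 p k) + (\<Prod>k\<in>#lam. h2 p k)))"
    by (simp only: of_real_eq_iff)
  have "(\<Sum>lam\<in>partitions n. cc lam * ((\<Prod>k\<in>#lam. h1 p k) + (\<Prod>k\<in>#lam. h2 p k))) \<le> 0"
  proof (rule sum_nonpos)
    fix lam assume lam: "lam \<in> partitions n"
    show "cc lam * ((\<Prod>k\<in>#lam. h1 p k) + (\<Prod>k\<in>#lam. h2 p k)) \<le> 0"
      by (rule mult_nonneg_nonpos) (use cc(1) lam in simp, rule part_ineq[OF p2 lam[unfolded n_def]])
  qed
  then show False using eq by (simp add: n_def)
qed

theorem theorem3p1: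
  fixes a b c :: nat
  assumes "b \<le> a" and "c \<le> b" and "1 \<le> c"
    and "odd b" and "odd c"
    and "e_positive (spider_V a b c) (spider_E a b c)"
  shows "a = b + c"
proof (rule ccontr)
  assume ne: "a \<noteq> b + c"
  show False
  proof (cases "odd a")
    case True
    then show False using case_odd[OF assms(6) True assms(4,5)] by simp
  next
    case False
    then have ea: "even a" by simp
    show False
    proof (cases "b + c < a")
      case True
      then show False using case_even[OF assms(6) ea assms(4,5) True] by simp
    next
      case False
      then have "a < b + c" using ne by simp
      then show False using case_mid[OF assms(6) ea assms(4,5) _ assms(1,2,3)] by simp
    qed
  qed
qed

end
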